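(* For any $\alpha>0$ there exists a zero-free function $f\in A^{-\infty}$ such that $1/f\in A^{-\infty}$ and $H_\lambda(D_+(f))=\infty$ for $\lambda(t)=t|\log t|^\alpha$.
   Context: $\mathbf D$ is the open unit disc and $\mathbf T$ the unit circle. $A^{-\infty}$ is the set of analytic functions $f$ in $\mathbf D$ for which there exist constants $C,k$ with $|f(z)|\le C(1-|z|)^{-k}$ for all $z\in\mathbf D$. For $f\in A^{-\infty}$, $D_+(f)=\{\theta\in[0,2\pi):\ \liminf_{r\to1}\frac{\log|f(re^{i\theta})|}{|\log(1-r)|}>0\}$ (identified with a subset of $\mathbf T$ via $\theta\mapsto e^{i\theta}$). For an increasing $\lambda$ with $\lambda(0)=0$, $H_\lambda(C)=\lim_{\epsilon\to0}\inf\{\sum_s\lambda(|J_s|): C\subset\bigcup_s J_s,\ |J_s|<\epsilon\}$, the $J_s$ being arcs of $\mathbf T$ of length $|J_s|$. *)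

theory Defs
  imports "HOL-Analysis.Analysis"
begin

definition A_neg_inf :: "(complex \<Rightarrow> complex) \<Rightarrow> bool" where
  "A_neg_inf f \<longleftrightarrow> f holomorphic_on ball 0 1 \<and>
     (\<exists>C k::real. \<forall>z\<in>ball 0 1. norm (f z) \<le> C * (1 - norm z) powr (- k))"

definition D_plus :: "(complex \<Rightarrow> complex) \<Rightarrow> real set" where
  "D_plus f = {\<theta> \<in> {0..<2*pi}.
     Liminf (at_left 1) (\<lambda>r::real. ereal (ln (norm (f (complex_of_real r * cis \<theta>))) / \<bar>ln (1 - r)\<bar>)) > 0}"

definition arc :: "real \<Rightarrow> real \<Rightarrow> complex set" where
  "arc a l = cis ` {a..a+l}"

text \<open>Hausdorff measure H_lambda of a subset of the unit circle, via countable covers by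
  arcs of length < eps; the limit eps -> 0 of a quantity increasing as eps decreases is
  written as a supremum.\<close>
definition hausdorff_lambda :: "(real \<Rightarrow> real) \<Rightarrow> complex set \<Rightarrow> ennreal" where
  "hausdorff_lambda lam C =
     (SUP \<epsilon>\<in>{0<..}. INF (a, l)\<in>{(a, l). (\<forall>n. 0 \<le> l n \<and> l n < \<epsilon>) \<and> C \<subseteq> (\<Union>n. arc (a n) (l n))}.
         (\<Sum>n. ennreal (lam (l n))))"

end

theory Submission imports Defs "HOL-Library.Real_Mod" "HOL-Complex_Analysis.Cauchy_Integral_Formula" begin

locale cset =
  fixes b :: nat and \<alpha> :: real
  assumes b7: "b \<ge> 7" and apos: "\<alpha> > 0" and bq: "real b powr \<alpha> \<ge> 32"
begin

definition m :: "nat \<Rightarrow> nat" where "m j = 2 ^ (b ^ j)"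
definition P :: "nat \<Rightarrow> nat" where "P j = 2 ^ (b ^ j - 1 - 4 * j)"
definition B :: "nat \<Rightarrow> nat" where "B j = 2 ^ (b ^ Suc j - b ^ j - 4)"

lemma bpow_ge: "b ^ k \<ge> 5 * k + 1"
proof (induction k)
  case (Suc k)
  have "b ^ Suc k = b * b ^ k" by simp
  also have "\<dots> \<ge> 7 * b ^ k" using b7 by simp
  finally have "7 * b ^ k \<le> b ^ Suc k" .
  then show ?case using Suc by (simp only: mult_Suc_right)
qed simp

lemma bpow_step: "b ^ Suc j \<ge> b ^ j + 6 * b ^ j"
proof -
  have "b ^ Suc j = b * b ^ j" by simp
  also have "\<dots> \<ge> 7 * b ^ j" using b7 by simp
  finally show ?thesis by linarith
qed

lemma bpow_pos: "b ^ j \<ge> 1"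
  using b7 by simp

lemma P_Suc: "P (Suc j) = B j * P j"
proof -
  have a: "b ^ Suc j \<ge> b ^ j + 6" using bpow_step[of j] bpow_pos[of j] by linarith
  have c: "b ^ j \<ge> 4 * j + 1" using bpow_ge[of j] by linarith
  have "b ^ Suc j - 1 - 4 * Suc j = (b ^ Suc j - b ^ j - 4) + (b ^ j - 1 - 4 * j)"
    using a c by (simp only: mult_Suc_right)
  thus ?thesis unfolding P_def B_def by (simp add: power_add)
qed

lemma m_Suc: "m (Suc j) = 16 * B j * m j"
proof -
  have a: "b ^ Suc j \<ge> b ^ j + 6" using bpow_step[of j] bpow_pos[of j] by linarith
  have "b ^ Suc j = 4 + (b ^ Suc j - b ^ j - 4) + b ^ j" using a by linarith
  hence "(2::nat) ^ b ^ Suc j = 2^4 * 2 ^ (b ^ Suc j - b ^ j - 4) * 2 ^ b ^ j"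
    by (metis power_add)
  thus ?thesis unfolding m_def B_def by simp
qed

lemma m_P: "m j = 2 * 16 ^ j * P j"
proof -
  have c: "b ^ j \<ge> 4 * j + 1" using bpow_ge[of j] by linarith
  have "b ^ j = 1 + 4 * j + (b ^ j - 1 - 4 * j)" using c by linarith
  hence "(2::nat) ^ b ^ j = 2 * 2 ^ (4 * j) * 2 ^ (b ^ j - 1 - 4 * j)"
    by (metis power_add power_one_right)
  thus ?thesis unfolding m_def P_def by (simp add: power_mult)
qed

lemma B_pos: "B j \<ge> 1" unfolding B_def by simp
lemma P_pos: "P j \<ge> 1" unfolding P_def by simp
lemma m_ge2: "m j \<ge> 2"
  unfolding m_def using bpow_pos[of j] by (metis One_nat_def power_increasing power_one_right one_le_numeral)
lemma m_Suc_ge: "m (Suc j) \<ge> 2 * m j"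
  using m_Suc[of j] B_pos[of j] by simp
lemma m_dvd: "j \<le> k \<Longrightarrow> m j dvd m k"
  unfolding m_def using b7 by (intro le_imp_power_dvd power_increasing) auto
lemma P_ge: "P j \<ge> 2 ^ j"
proof -
  have "j \<le> b ^ j - 1 - 4 * j" using bpow_ge[of j] by linarith
  thus ?thesis unfolding P_def by (simp add: power_increasing)
qed
lemma m_ge: "m j \<ge> 2 ^ j"
proof -
  have "j \<le> b ^ j" using bpow_ge[of j] by linarith
  thus ?thesis unfolding m_def by (simp add: power_increasing)
qed
lemma m_mono_shift: "real (m (i + J)) \<ge> 2 ^ i * real (m J)"
proof (induction i)
  case (Suc i)
  have "real (m (Suc (i + J))) \<ge> 2 * real (m (i + J))" using m_Suc_ge[of "i+J"] by linarith
  thus ?case using Suc by simp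
qed simp
lemma m_strict: "j < k \<Longrightarrow> m j < m k"
  unfolding m_def using b7 by (intro power_strict_increasing) auto
lemma m_less_iff: "m j < m k \<longleftrightarrow> j < k"
  using m_strict by (metis linorder_neqE_nat order_less_asym)
lemma m_0: "m 0 = 2" unfolding m_def by simp
lemma m_pos: "real (m j) > 0" using m_ge2[of j] by simp


definition F :: "nat \<Rightarrow> real \<Rightarrow> int" where "F j x = \<lfloor>real (P j) * x\<rfloor>"
definition dig :: "nat \<Rightarrow> real \<Rightarrow> int" where "dig j x = F (Suc j) x - int (B j) * F j x"
definition trm :: "nat \<Rightarrow> real \<Rightarrow> real" where "trm j x = 2 * pi * dig j x / real (m (Suc j))"
definition psi :: "real \<Rightarrow> real" where "psi x = (\<Sum>j. trm j x)"

lemma dig_bounds: "0 \<le> dig j x \<and> dig j x \<le> int (B j) - 1"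
proof -
  define u where "u = real (P j) * x"
  have e: "real (P (Suc j)) * x = real (B j) * u" unfolding u_def P_Suc by simp
  have Bp: "real (B j) > 0" using B_pos[of j] by simp
  have "real_of_int (int (B j) * \<lfloor>u\<rfloor>) \<le> real (B j) * u"
    using Bp by (simp add: mult_left_mono)
  hence l: "int (B j) * \<lfloor>u\<rfloor> \<le> \<lfloor>real (B j) * u\<rfloor>" by (simp add: le_floor_iff)
  have "real (B j) * u < real_of_int (int (B j) * (\<lfloor>u\<rfloor> + 1))"
    using Bp by simp
  hence r: "\<lfloor>real (B j) * u\<rfloor> < int (B j) * (\<lfloor>u\<rfloor> + 1)" by (simp add: floor_less_iff)
  show ?thesis unfolding dig_def F_def e u_def[symmetric] using l r by (simp add: algebra_simps)
qed

lemma trm_nonneg: "trm j x \<ge> 0"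
  unfolding trm_def using dig_bounds[of j x] by simp

lemma trm_le: "trm j x \<le> pi / (8 * real (m j))"
proof -
  have "real_of_int (dig j x) \<le> real (B j)" using dig_bounds[of j x] by linarith
  hence "trm j x \<le> 2 * pi * real (B j) / real (m (Suc j))"
    unfolding trm_def by (intro divide_right_mono mult_left_mono) auto
  also have "\<dots> = pi / (8 * real (m j))"
    unfolding m_Suc using B_pos[of j] m_ge2[of j] by (simp add: field_simps)
  finally show ?thesis .
qed

lemma trm_le2: "trm j x \<le> pi / 16 * (1/2) ^ j"
proof -
  have "real (m j) \<ge> 2 ^ j * 2" using m_mono_shift[of j 0] m_0 by simp
  hence "pi / (8 * real (m j)) \<le> pi / (8 * (2 ^ j * 2))"
    using m_pos[of j] by (intro divide_left_mono) auto
  moreover have "pi / (8 * (2 ^ j * 2)) = pi / 16 * (1/2::real) ^ j" by (simp add: power_divide)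
  ultimately show ?thesis using trm_le[of j x] by linarith
qed

lemma trm_summable: "summable (\<lambda>j. trm (j + k) x)"
proof (rule summable_comparison_test)
  show "\<exists>N. \<forall>n\<ge>N. norm (trm (n + k) x) \<le> pi / 16 * (1/2) ^ (n + k)"
    using trm_le2 trm_nonneg by auto
  show "summable (\<lambda>n. pi / 16 * (1 / 2) ^ (n + k) :: real)"
    by (intro summable_mult summable_ignore_initial_segment[where k=k, of "\<lambda>n. (1/2::real)^n", simplified]) simp
qed

lemma tail_bounds: "0 \<le> (\<Sum>i. trm (i + J) x) \<and> (\<Sum>i. trm (i + J) x) \<le> pi / (4 * real (m J))"
proof
  show "0 \<le> (\<Sum>i. trm (i + J) x)" using trm_summable trm_nonneg by (intro suminf_nonneg) auto
  have le: "trm (i + J) x \<le> pi / (8 * real (m J)) * (1/2)^i" for i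
  proof -
    have "real (m (i + J)) \<ge> 2 ^ i * real (m J)" by (rule m_mono_shift)
    hence "pi / (8 * real (m (i + J))) \<le> pi / (8 * (2 ^ i * real (m J)))"
      using m_pos[of J] m_pos[of "i+J"] by (intro divide_left_mono) auto
    moreover have "pi / (8 * (2 ^ i * real (m J))) = pi / (8 * real (m J)) * (1/2::real) ^ i"
      by (simp add: power_divide)
    ultimately show ?thesis using trm_le[of "i+J" x] by linarith
  qed
  have s: "summable (\<lambda>i. pi / (8 * real (m J)) * (1/2::real)^i)" by simp
  have "(\<Sum>i. trm (i + J) x) \<le> (\<Sum>i. pi / (8 * real (m J)) * (1/2::real)^i)"
    using trm_summable s le by (intro suminf_le) auto
  also have "\<dots> = pi / (4 * real (m J))"
    by (subst suminf_mult) (simp_all add: suminf_geometric)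
  finally show "(\<Sum>i. trm (i + J) x) \<le> pi / (4 * real (m J))" .
qed

lemma psi_split: "psi x = (\<Sum>j<J. trm j x) + (\<Sum>i. trm (i + J) x)"
  unfolding psi_def using suminf_split_initial_segment[OF trm_summable[of 0 x, simplified], of J] by simp

lemma psi_bounds: "0 \<le> psi x \<and> psi x \<le> pi / 8"
  using psi_split[of x 0] tail_bounds[of 0 x] m_0 by simp

lemma partial_int: "\<exists>k::int. real (m J) * (\<Sum>j<J. trm j x) = 2 * pi * k"
proof -
  define k where "k = (\<Sum>j<J. dig j x * int (m J div m (Suc j)))"
  have "real (m J) * trm j x = 2 * pi * (dig j x * int (m J div m (Suc j)))" if "j < J" for j
  proof -
    have d: "m (Suc j) dvd m J" using that by (intro m_dvd) simp
    have "real (m J) = real (m J div m (Suc j)) * real (m (Suc j))"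
      using d by (metis dvd_div_mult_self of_nat_mult)
    thus ?thesis unfolding trm_def using m_ge2[of "Suc j"] by (simp add: field_simps)
  qed
  hence "real (m J) * (\<Sum>j<J. trm j x) = 2 * pi * k"
    unfolding k_def sum_distrib_left of_int_sum by (intro sum.cong) auto
  thus ?thesis by blast
qed

lemma cos_psi: "cos (real (m J) * psi x) \<ge> 1/2"
proof -
  obtain k :: int where k: "real (m J) * (\<Sum>j<J. trm j x) = 2 * pi * k" using partial_int by blast
  define y where "y = real (m J) * (\<Sum>i. trm (i + J) x)"
  have y: "0 \<le> y" "y \<le> pi / 4" using tail_bounds[of J x] m_ge2[of J] unfolding y_def
    by (auto simp: field_simps)
  have "real (m J) * psi x = y + 2 * pi * k" unfolding psi_split[of x J] y_def using k
    by (simp add: algebra_simps)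
  hence "cos (real (m J) * psi x) = cos y" by (simp add: cos_add)
  also have "cos y \<ge> cos (pi/3)" using y by (intro cos_monotone_0_pi_le) auto
  finally show ?thesis by (simp add: cos_60)
qed


lemma F_mono: "x \<le> y \<Longrightarrow> F j x \<le> F j y"
  unfolding F_def by (intro floor_mono mult_left_mono) auto

lemma F0: "0 \<le> x \<Longrightarrow> x < 1 \<Longrightarrow> F 0 x = 0"
  unfolding F_def P_def by (simp add: floor_eq_iff)

lemma F_differ: assumes "x < y" shows "\<exists>k. F k x \<noteq> F k y"
proof -
  obtain k where k: "1 / (y - x) < 2 ^ k" using real_arch_pow[of 2 "1/(y-x)"] by auto
  have "real (P k) \<ge> 2 ^ k" using P_ge[of k] by (metis of_nat_le_iff of_nat_numeral of_nat_power)
  hence "1 / (y - x) < real (P k)" using k by linarith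
  hence "1 < real (P k) * (y - x)" using assms by (simp add: field_simps)
  hence "real (P k) * x + 1 \<le> real (P k) * y" by (simp add: algebra_simps)
  hence "\<lfloor>real (P k) * x + 1\<rfloor> \<le> \<lfloor>real (P k) * y\<rfloor>" by (rule floor_mono)
  hence "F k x + 1 \<le> F k y" unfolding F_def by simp
  thus ?thesis by (intro exI[of _ k]) linarith
qed

lemma sep:
  assumes x0: "0 \<le> x" and xy: "x < y" and y1: "y < 1"
  shows "\<exists>K. 5 / real (m (Suc K)) \<le> psi y - psi x \<and> psi y - psi x \<le> 1 / real (m K)
            \<and> y - x \<le> 16 ^ Suc K * (psi y - psi x)"
proof -
  define J where "J = (LEAST k. F k x \<noteq> F k y)"
  have FJ: "F J x \<noteq> F J y" unfolding J_def using F_differ[OF xy] by (rule LeastI_ex)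
  have Fbelow: "k < J \<Longrightarrow> F k x = F k y" for k unfolding J_def by (rule not_not[THEN iffD1], rule not_less_Least)
  have F0x: "F 0 x = 0" using x0 xy y1 by (intro F0) auto
  have F0y: "F 0 y = 0" using x0 xy y1 by (intro F0) auto
  have "J \<noteq> 0"
  proof
    assume "J = 0" with FJ F0x F0y show False by simp
  qed
  then obtain K where JK: "J = Suc K" by (cases J) auto
  define D where "D = F J y - F J x"
  have D1: "D \<ge> 1" using F_mono[of x y J] xy FJ unfolding D_def by linarith
  have digeq: "j < K \<Longrightarrow> dig j x = dig j y" for j unfolding dig_def using Fbelow JK by simp
  have digK: "dig K y - dig K x = D" unfolding dig_def D_def JK using Fbelow[of K] JK by simp
  have DB: "D \<le> int (B K) - 1" using digK dig_bounds[of K x] dig_bounds[of K y] by linarith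
  have sumdiff: "(\<Sum>j<J. trm j y) - (\<Sum>j<J. trm j x) = 2 * pi * D / real (m J)"
  proof -
    have "(\<Sum>j<K. trm j y) = (\<Sum>j<K. trm j x)" unfolding trm_def using digeq by (intro sum.cong) auto
    moreover have "trm K y - trm K x = 2 * pi * D / real (m J)"
    proof -
      have e: "real_of_int (dig K y) = real_of_int D + real_of_int (dig K x)"
        using digK by (metis diff_add_cancel of_int_add)
      show ?thesis unfolding trm_def JK e using m_pos[of "Suc K"] by (simp add: field_simps)
    qed
    ultimately show ?thesis unfolding JK by simp
  qed
  define M where "M = real (m J)"
  have Mpos: "M > 0" unfolding M_def by (rule m_pos)
  define tx where "tx = (\<Sum>i. trm (i + J) x)"
  define ty where "ty = (\<Sum>i. trm (i + J) y)"
  have tb: "0 \<le> tx" "tx \<le> pi / (4 * M)" "0 \<le> ty" "ty \<le> pi / (4 * M)"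
    using tail_bounds[of J x] tail_bounds[of J y] unfolding tx_def ty_def M_def by auto
  have teq: "psi y - psi x = 2 * pi * D / M + (ty - tx)"
    using psi_split[of x J] psi_split[of y J] sumdiff unfolding tx_def ty_def M_def by simp
  define d where "d = real_of_int D"
  have d1: "d \<ge> 1" using D1 unfolding d_def by simp
  have pib: "3 < pi" "pi < 4" using pi_gt3 pi_less_4 by auto
  have "(2 * pi - 5) * (d - 1) \<ge> 0" using d1 pib by (intro mult_nonneg_nonneg) auto
  hence low0: "2 * pi * d - pi / 4 \<ge> 5 * d" using pib by (simp add: algebra_simps)
  have "ty - tx \<ge> - (pi / (4 * M))" using tb by linarith
  hence "psi y - psi x \<ge> 2 * pi * d / M - pi / (4 * M)" using teq unfolding d_def by linarith
  also have "2 * pi * d / M - pi / (4 * M) = (2 * pi * d - pi / 4) / M" using Mpos by (simp add: field_simps)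
  also have "\<dots> \<ge> 5 * d / M" using low0 Mpos by (intro divide_right_mono) auto
  finally have low: "psi y - psi x \<ge> 5 * d / M" .
  have low5: "5 / M \<le> 5 * d / M" using d1 Mpos by (intro divide_right_mono) auto
  have mK: "M = 16 * real (B K) * real (m K)" unfolding M_def JK m_Suc by simp
  have mKpos: "real (m K) > 0" by (rule m_pos)
  have Bpos: "real (B K) \<ge> 1" using B_pos[of K] by simp
  have dB: "d \<le> real (B K)" using DB unfolding d_def by linarith
  have "psi y - psi x \<le> 2 * pi * d / M + pi / (4 * M)" using teq tb unfolding d_def by linarith
  also have "\<dots> \<le> 2 * pi * real (B K) / M + pi / (4 * M)"
    using dB Mpos by (intro add_right_mono divide_right_mono) auto
  also have "\<dots> = pi / (8 * real (m K)) + pi / (64 * real (B K) * real (m K))"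
    unfolding mK using Bpos mKpos by (simp add: field_simps)
  also have "pi / (64 * real (B K) * real (m K)) \<le> pi / (8 * real (m K))"
    using Bpos mKpos by (intro divide_left_mono) auto
  also have "pi / (8 * real (m K)) + pi / (8 * real (m K)) = pi / 4 / real (m K)" by simp
  also have "\<dots> \<le> 1 / real (m K)" using pib mKpos by (intro divide_right_mono) auto
  finally have up: "psi y - psi x \<le> 1 / real (m K)" by simp
  have PJ: "real (P J) = M / (2 * 16 ^ J)" unfolding M_def m_P by simp
  have "real (P J) * y < F J y + 1" unfolding F_def by linarith
  moreover have "F J x \<le> real (P J) * x" unfolding F_def by linarith
  ultimately have "real (P J) * (y - x) < d + 1" unfolding d_def D_def by (simp add: algebra_simps)
  hence "M / (2 * 16 ^ J) * (y - x) < 2 * d" using d1 unfolding PJ by linarith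
  hence "y - x < 4 * 16 ^ J * d / M" using Mpos by (simp add: field_simps)
  also have "\<dots> = (4/5) * 16 ^ J * (5 * d / M)" by simp
  also have "\<dots> \<le> (4/5) * 16 ^ J * (psi y - psi x)" using low by (intro mult_left_mono) auto
  also have "\<dots> \<le> 16 ^ J * (psi y - psi x)"
  proof -
    have "0 < 5 / M" using Mpos by simp
    hence "psi y - psi x \<ge> 0" using low low5 by linarith
    thus ?thesis by (intro mult_right_mono) auto
  qed
  finally have yx: "y - x \<le> 16 ^ Suc K * (psi y - psi x)" unfolding JK by simp
  have "5 / real (m (Suc K)) \<le> psi y - psi x" using low low5 unfolding M_def JK by linarith
  thus ?thesis using up yx by blast
qed


definition lam :: "real \<Rightarrow> real" where "lam t = t * \<bar>ln t\<bar> powr \<alpha>"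

lemma lam_nonneg: "t \<ge> 0 \<Longrightarrow> lam t \<ge> 0" unfolding lam_def by simp

lemma lam_mono:
  assumes t0: "0 < t" and tl: "t \<le> l" and le: "l \<le> exp (- \<alpha>)"
  shows "lam t \<le> lam l"
proof -
  have l0: "0 < l" using t0 tl by linarith
  define s1 where "s1 = - ln l"
  define s2 where "s2 = - ln t"
  have "ln l \<le> ln (exp (- \<alpha>))" using le l0 by (subst ln_le_cancel_iff) auto
  hence s1a: "s1 \<ge> \<alpha>" unfolding s1_def by simp
  have s12: "s1 \<le> s2" unfolding s1_def s2_def using t0 tl by simp
  have s1p: "s1 > 0" using s1a apos by linarith
  have tt: "t = exp (- s2)" unfolding s2_def using t0 by simp
  have ll: "l = exp (- s1)" unfolding s1_def using l0 by simp
  have at: "\<bar>ln t\<bar> = s2" unfolding s2_def using s1p s12 s2_def by linarith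
  have al: "\<bar>ln l\<bar> = s1" unfolding s1_def using s1p s1_def by linarith
  have "ln (s2 / s1) \<le> s2 / s1 - 1" using s1p s12 by (intro ln_le_minus_one) auto
  hence "\<alpha> * ln (s2 / s1) \<le> \<alpha> * (s2 / s1 - 1)" using apos by (intro mult_left_mono) auto
  also have "\<alpha> * (s2 / s1 - 1) = (\<alpha> / s1) * (s2 - s1)" using s1p by (simp add: field_simps)
  also have "\<dots> \<le> 1 * (s2 - s1)" using s1a s1p s12 by (intro mult_right_mono) auto
  finally have k: "\<alpha> * ln (s2 / s1) \<le> s2 - s1" by simp
  have "(s2 / s1) powr \<alpha> = exp (\<alpha> * ln (s2 / s1))"
    using s1p s12 unfolding powr_def by (simp add: mult.commute)
  also have "\<dots> \<le> exp (s2 - s1)" using k by simp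
  finally have q0: "s2 powr \<alpha> / s1 powr \<alpha> \<le> exp (s2 - s1)" by (simp only: powr_divide)
  have "s1 powr \<alpha> > 0" using s1p by simp
  hence q: "s2 powr \<alpha> \<le> s1 powr \<alpha> * exp (s2 - s1)" using q0 by (simp add: divide_le_eq mult.commute)
  have "lam t = exp (- s2) * s2 powr \<alpha>" unfolding lam_def at tt[symmetric] ..
  also have "\<dots> \<le> exp (- s2) * (s1 powr \<alpha> * exp (s2 - s1))" using q by (intro mult_left_mono) auto
  also have "\<dots> = exp (- s1) * s1 powr \<alpha>" by (simp add: exp_diff exp_minus field_simps)
  also have "\<dots> = lam l" unfolding lam_def al ll[symmetric] ..
  finally show ?thesis .
qed

definition kap :: "nat \<Rightarrow> real" where
  "kap N = ln 2 powr \<alpha> * (real b powr \<alpha>) ^ N / 16 ^ Suc N"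

lemma kap_pos: "kap N > 0" unfolding kap_def using b7 by simp

lemma kap_ge: "kap N \<ge> ln 2 powr \<alpha> / 16 * 2 ^ N"
proof -
  have "(32::real) ^ N \<le> (real b powr \<alpha>) ^ N" using bq by (intro power_mono) auto
  hence "(2::real) ^ N * 16 ^ N \<le> (real b powr \<alpha>) ^ N" by (simp add: power_mult_distrib[symmetric])
  hence "ln 2 powr \<alpha> * (2 ^ N * 16 ^ N) \<le> ln 2 powr \<alpha> * (real b powr \<alpha>) ^ N"
    by (intro mult_left_mono) auto
  thus ?thesis unfolding kap_def by (simp add: field_simps)
qed

lemma lnm: "ln (real (m K)) powr \<alpha> = ln 2 powr \<alpha> * (real b powr \<alpha>) ^ K"
proof -
  have "ln (real (m K)) = real b ^ K * ln 2" unfolding m_def by (simp add: ln_realpow)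
  hence "ln (real (m K)) powr \<alpha> = (real b ^ K) powr \<alpha> * ln 2 powr \<alpha>" by (simp add: powr_mult)
  also have "(real b ^ K) powr \<alpha> = (real b powr \<alpha>) ^ K"
    using b7 by (simp add: powr_power powr_realpow[symmetric] powr_powr mult.commute)
  finally show ?thesis by simp
qed

lemma diam_lt:
  assumes N: "5 / real (m N) \<le> exp (- \<alpha>)"
    and x0: "0 \<le> x" and xy: "x < y" and y1: "y < 1"
    and tl: "psi y - psi x \<le> l" and l: "l < 5 / real (m N)"
  shows "y - x \<le> lam l / kap N"
proof -
  obtain K where K1: "5 / real (m (Suc K)) \<le> psi y - psi x" and K2: "psi y - psi x \<le> 1 / real (m K)"
    and K3: "y - x \<le> 16 ^ Suc K * (psi y - psi x)" using sep[OF x0 xy y1] by blast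
  define t where "t = psi y - psi x"
  have tpos: "t > 0" using K1 m_pos[of "Suc K"] unfolding t_def by (smt (verit) divide_pos_pos)
  have "5 / real (m (Suc K)) < 5 / real (m N)" using K1 tl l unfolding t_def by linarith
  hence "real (m N) < real (m (Suc K))" using m_pos[of N] m_pos[of "Suc K"] by (simp add: field_simps)
  hence "N < Suc K" using m_less_iff by simp
  hence NK: "N \<le> K" by simp
  have "ln (real (m K)) \<le> - ln t"
  proof -
    have "t \<le> 1 / real (m K)" using K2 unfolding t_def .
    hence "ln t \<le> ln (1 / real (m K))" using tpos m_pos[of K] by (subst ln_le_cancel_iff) auto
    thus ?thesis using m_pos[of K] by (simp add: ln_div)
  qed
  moreover have "ln (real (m K)) \<ge> 0" using m_ge2[of K] by simp
  moreover have "- ln t \<le> \<bar>ln t\<bar>" by simp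
  ultimately have "ln (real (m K)) powr \<alpha> \<le> \<bar>ln t\<bar> powr \<alpha>" using apos by (intro powr_mono2) auto
  hence lt: "t * (ln 2 powr \<alpha> * (real b powr \<alpha>) ^ K) \<le> lam t" unfolding lam_def lnm
    using tpos by (intro mult_left_mono) auto
  define q where "q = real b powr \<alpha>"
  have q: "q \<ge> 16" using bq unfolding q_def by linarith
  have "16 ^ Suc K * kap N = ln 2 powr \<alpha> * q ^ N * 16 ^ (K - N)"
    unfolding kap_def q_def using NK by (simp add: field_simps power_diff)
  also have "\<dots> \<le> ln 2 powr \<alpha> * q ^ N * q ^ (K - N)"
    using q by (intro mult_left_mono power_mono) auto
  also have "\<dots> = ln 2 powr \<alpha> * q ^ K" using NK by (simp add: power_add[symmetric])
  finally have kk: "16 ^ Suc K * kap N \<le> ln 2 powr \<alpha> * q ^ K" .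
  have "(y - x) * kap N \<le> 16 ^ Suc K * t * kap N" using K3 kap_pos[of N] unfolding t_def
    by (intro mult_right_mono) auto
  also have "\<dots> = t * (16 ^ Suc K * kap N)" by simp
  also have "\<dots> \<le> t * (ln 2 powr \<alpha> * q ^ K)" using kk tpos by (intro mult_left_mono) auto
  also have "\<dots> \<le> lam t" using lt unfolding q_def .
  also have "\<dots> \<le> lam l" using tpos tl l N unfolding t_def by (intro lam_mono) auto
  finally show ?thesis using kap_pos[of N] by (simp add: field_simps)
qed

lemma cis_close:
  assumes "cis u \<in> arc a l" "cis v \<in> arc a l" "l < 1" "0 \<le> u" "u \<le> pi/8" "0 \<le> v" "v \<le> pi/8"
  shows "\<bar>u - v\<bar> \<le> l"
proof -
  obtain s where s: "s \<in> {a..a+l}" "cis u = cis s" using assms(1) unfolding arc_def by auto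
  obtain s' where s': "s' \<in> {a..a+l}" "cis v = cis s'" using assms(2) unfolding arc_def by auto
  have "cis (u - s) = 1" using s(2) by (simp add: cis_divide[symmetric])
  then obtain n :: int where n: "u - s = of_int n * (2 * pi)" using cis_eq_1_iff by blast
  have "cis (v - s') = 1" using s'(2) by (simp add: cis_divide[symmetric])
  then obtain n' :: int where n': "v - s' = of_int n' * (2 * pi)" using cis_eq_1_iff by blast
  have "\<bar>real_of_int (n - n') * (2 * pi)\<bar> < 2 * pi"
  proof -
    have "real_of_int (n - n') * (2 * pi) = (u - v) - (s - s')" using n n' by (simp add: algebra_simps)
    moreover have "\<bar>(u - v) - (s - s')\<bar> < 2 * pi" using assms s(1) s'(1) pi_gt3 by auto
    ultimately show ?thesis by simp
  qed
  hence "\<bar>real_of_int (n - n')\<bar> < 1" using pi_gt_zero by (simp add: abs_mult)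
  hence "n = n'" by linarith
  hence "u - v = s - s'" using n n' by (simp add: algebra_simps)
  thus ?thesis using s(1) s'(1) by auto
qed


lemma diam:
  assumes N: "5 / real (m N) \<le> exp (- \<alpha>)"
    and x: "x \<in> {0..<1}" and y: "y \<in> {0..<1}"
    and tl: "\<bar>psi y - psi x\<bar> \<le> l" and l: "l < 5 / real (m N)"
  shows "\<bar>y - x\<bar> \<le> lam l / kap N"
proof -
  have l0: "l \<ge> 0" using tl by linarith
  have r0: "lam l / kap N \<ge> 0" using lam_nonneg[OF l0] kap_pos[of N] by simp
  consider "x < y" | "y < x" | "x = y" by linarith
  thus ?thesis
  proof cases
    case 1 thus ?thesis using diam_lt[OF N _ 1 _ _ l, of] x y tl by auto
  next
    case 2 thus ?thesis using diam_lt[OF N _ 2 _ _ l, of] x y tl by auto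
  qed (use r0 in simp)
qed

lemma cover_bound:
  assumes N: "5 / real (m N) \<le> exp (- \<alpha>)" and l: "\<And>n. 0 \<le> l n \<and> l n < 5 / real (m N)"
    and cov: "cis ` psi ` {0..<1} \<subseteq> (\<Union>n. arc (a n) (l n))"
  shows "ennreal (kap N / 2) \<le> (\<Sum>n. ennreal (lam (l n)))"
proof -
  have e1: "exp (- \<alpha>) < 1" using apos by simp
  define U where "U n = {x\<in>{0..<1}. cis (psi x) \<in> arc (a n) (l n)}" for n
  define d where "d n = lam (l n) / kap N" for n
  have d0: "d n \<ge> 0" for n unfolding d_def using lam_nonneg[of "l n"] l[of n] kap_pos[of N] by simp
  have dU: "x \<in> U n \<Longrightarrow> y \<in> U n \<Longrightarrow> \<bar>y - x\<bar> \<le> d n" for x y n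
  proof -
    assume xU: "x \<in> U n" and yU: "y \<in> U n"
    have ln1: "l n < 1" using l[of n] N e1 by linarith
    have "\<bar>psi y - psi x\<bar> \<le> l n"
      using xU yU psi_bounds[of x] psi_bounds[of y] ln1 unfolding U_def
      by (intro cis_close[of _ "a n" "l n"]) auto
    thus ?thesis unfolding d_def using xU yU l[of n] by (intro diam[OF N]) (auto simp: U_def)
  qed
  define c where "c n = (SOME x. x \<in> U n)" for n
  define V where "V n = (if U n = {} then {} else {c n - d n .. c n + d n})" for n
  have UV: "U n \<subseteq> V n" for n
  proof (cases "U n = {}")
    case False
    hence cU: "c n \<in> U n" unfolding c_def by (simp add: some_in_eq)
    show ?thesis
    proof
      fix x assume "x \<in> U n"
      hence "\<bar>x - c n\<bar> \<le> d n" using dU cU by blast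
      thus "x \<in> V n" unfolding V_def using False by auto
    qed
  qed (simp add: V_def)
  have sub: "{0..<1::real} \<subseteq> (\<Union>n. V n)"
  proof
    fix x :: real assume x: "x \<in> {0..<1}"
    hence "cis (psi x) \<in> (\<Union>n. arc (a n) (l n))" using cov by blast
    then obtain n where "cis (psi x) \<in> arc (a n) (l n)" by blast
    hence "x \<in> U n" unfolding U_def using x by auto
    thus "x \<in> (\<Union>n. V n)" using UV by blast
  qed
  have mV: "emeasure lborel (V n) \<le> ennreal (2 / kap N) * ennreal (lam (l n))" for n
  proof -
    have "emeasure lborel (V n) \<le> ennreal (2 * d n)"
      unfolding V_def using d0[of n] by auto
    also have "2 * d n = (2 / kap N) * lam (l n)" unfolding d_def by simp
    also have "ennreal \<dots> = ennreal (2 / kap N) * ennreal (lam (l n))"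
      using kap_pos[of N] lam_nonneg[of "l n"] l[of n] by (intro ennreal_mult) auto
    finally show ?thesis .
  qed
  have Vm: "V n \<in> sets borel" for n by (auto simp: V_def)
  have "(1::ennreal) = emeasure lborel {0..<1::real}" by simp
  also have "\<dots> \<le> emeasure lborel (\<Union>n. V n)" using sub Vm by (intro emeasure_mono) auto
  also have "\<dots> \<le> (\<Sum>n. emeasure lborel (V n))"
    by (intro emeasure_subadditive_countably) (auto simp: V_def)
  also have "\<dots> \<le> (\<Sum>n. ennreal (2 / kap N) * ennreal (lam (l n)))"
    using mV by (intro suminf_le) auto
  also have "\<dots> = ennreal (2 / kap N) * (\<Sum>n. ennreal (lam (l n)))" by simp
  finally have one: "1 \<le> ennreal (2 / kap N) * (\<Sum>n. ennreal (lam (l n)))" .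
  have "ennreal (kap N / 2) = ennreal (kap N / 2) * 1" by simp
  also have "\<dots> \<le> ennreal (kap N / 2) * (ennreal (2 / kap N) * (\<Sum>n. ennreal (lam (l n))))"
    using one by (intro mult_left_mono) auto
  also have "\<dots> = (ennreal (kap N / 2) * ennreal (2 / kap N)) * (\<Sum>n. ennreal (lam (l n)))"
    by (simp only: mult.assoc)
  also have "ennreal (kap N / 2) * ennreal (2 / kap N) = ennreal (kap N / 2 * (2 / kap N))"
    using kap_pos[of N] by (intro ennreal_mult[symmetric]) auto
  also have "kap N / 2 * (2 / kap N) = 1" using kap_pos[of N] by simp
  finally show ?thesis by simp
qed


definition Mp :: "nat \<Rightarrow> nat" where "Mp j = (if j = 0 then 0 else m (j - 1))"
definition c :: "nat \<Rightarrow> real" where "c j = (\<Sum>n\<in>{Mp j<..m j}. 1 / real n)"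
definition g :: "complex \<Rightarrow> complex" where "g z = (\<Sum>j. complex_of_real (c j) * z ^ m j)"

lemma Mp_le: "Mp j \<le> m j"
  unfolding Mp_def using m_strict[of "j-1" j] by auto

lemma Mp_Suc: "Mp (Suc j) = m j" unfolding Mp_def by simp

lemma c_nonneg: "c j \<ge> 0" unfolding c_def by (intro sum_nonneg) auto

lemma ivl_split: "(a::nat) \<le> u \<Longrightarrow> u \<le> d \<Longrightarrow> (\<Sum>n\<in>{a<..d}. h n) = (\<Sum>n\<in>{a<..u}. h n) + (\<Sum>n\<in>{u<..d}. (h n :: real))"
proof -
  assume "a \<le> u" "u \<le> d"
  hence "{a<..d} = {a<..u} \<union> {u<..d}" by auto
  thus ?thesis by (simp add: sum.union_disjoint ivl_disj_int(2))
qed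

lemma ivl_join: "(a::nat) \<le> u \<Longrightarrow> u \<le> d \<Longrightarrow> (\<Sum>n\<in>{a<..u}. h n) + (\<Sum>n\<in>{u<..d}. (h n :: real)) = (\<Sum>n\<in>{a<..d}. h n)"
proof -
  assume A: "a \<le> u" "u \<le> d"
  show ?thesis using ivl_split[OF A, of h] by linarith
qed

lemma c_part_le:
  assumes "0 \<le> r" "r \<le> 1"
  shows "(\<Sum>j<J. c j * r ^ m j) \<le> (\<Sum>n\<in>{0<..Mp J}. r ^ n / real n)"
proof (induction J)
  case (Suc J)
  have "c J * r ^ m J = (\<Sum>n\<in>{Mp J<..m J}. r ^ m J / real n)"
    unfolding c_def sum_distrib_right by simp
  also have "\<dots> \<le> (\<Sum>n\<in>{Mp J<..m J}. r ^ n / real n)"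
    using assms by (intro sum_mono divide_right_mono power_decreasing) auto
  finally have "(\<Sum>j<Suc J. c j * r ^ m j) \<le> (\<Sum>n\<in>{0<..Mp J}. r ^ n / real n) + (\<Sum>n\<in>{Mp J<..m J}. r ^ n / real n)"
    using Suc by simp
  also have "\<dots> = (\<Sum>n\<in>{0<..Mp (Suc J)}. r ^ n / real n)"
    unfolding Mp_Suc by (rule ivl_join) (use Mp_le[of J] in auto)
  finally show ?case .
qed (simp add: Mp_def)

lemma c_part_harm: "(\<Sum>j<J. c j) = harm (Mp J)"
proof (induction J)
  case 0 thus ?case by (simp add: Mp_def harm_def)
next
  case (Suc J)
  have h: "harm n = (\<Sum>k\<in>{0<..n}. 1 / real k)" for n
    unfolding harm_def by (intro sum.cong) (auto simp: divide_inverse)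
  have "(\<Sum>j<Suc J. c j) = harm (Mp J) + c J" using Suc by simp
  also have "\<dots> = harm (Mp (Suc J))" unfolding h Mp_Suc c_def
    by (rule ivl_join) (use Mp_le[of J] in auto)
  finally show ?case .
qed

lemma logser: assumes "0 \<le> r" "r < 1"
  shows "(\<Sum>n\<in>{0<..N}. r ^ n / real n) \<le> - ln (1 - r)"
proof -
  have "(\<lambda>n. - ((-(-r))^n) / of_nat n) sums ln (1 + (-r))" using assms by (intro ln_series') auto
  hence "(\<lambda>n. - (- (r^n / real n))) sums (- ln (1 - r))" by (intro sums_minus) simp
  hence s: "(\<lambda>n. r^n / real n) sums (- ln (1 - r))" by simp
  have "(\<Sum>n\<in>{0<..N}. r ^ n / real n) = (\<Sum>n<Suc N. r ^ n / real n)"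
    by (intro sum.mono_neutral_left) auto
  also have "\<dots> \<le> (\<Sum>n. r ^ n / real n)"
    using s assms by (intro sum_le_suminf) (auto simp: sums_iff)
  also have "\<dots> = - ln (1 - r)" using s by (simp add: sums_iff)
  finally show ?thesis .
qed

lemma csum: assumes "0 \<le> r" "r < 1"
  shows "summable (\<lambda>j. c j * r ^ m j) \<and> (\<Sum>j. c j * r ^ m j) \<le> - ln (1 - r)"
proof -
  have b: "(\<Sum>j<J. c j * r ^ m j) \<le> - ln (1 - r)" for J
    using c_part_le[of r J] logser[of r "Mp J"] assms by linarith
  have s: "summable (\<lambda>j. c j * r ^ m j)"
    using assms c_nonneg by (intro summableI_nonneg_bounded[OF _ b]) auto
  thus ?thesis using b by (auto intro: suminf_le_const)
qed

lemma g_norm_summable: "norm z < 1 \<Longrightarrow> summable (\<lambda>j. norm (complex_of_real (c j) * z ^ m j))"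
  using csum[of "norm z"] c_nonneg by (simp add: norm_mult norm_power)

lemma g_bound: assumes "norm z < 1" shows "norm (g z) \<le> - ln (1 - norm z)"
proof -
  have "norm (g z) \<le> (\<Sum>j. norm (complex_of_real (c j) * z ^ m j))"
    unfolding g_def using g_norm_summable[OF assms] by (rule summable_norm)
  also have "\<dots> = (\<Sum>j. c j * norm z ^ m j)" using c_nonneg by (simp add: norm_mult norm_power)
  also have "\<dots> \<le> - ln (1 - norm z)" using csum[of "norm z"] assms by simp
  finally show ?thesis .
qed

lemma g_holo: "g holomorphic_on ball 0 1"
proof -
  have "(\<lambda>z. \<Sum>j. complex_of_real (c j) * z ^ m j) holomorphic_on ball 0 1"
  proof (rule holomorphic_uniform_sequence[where f = "\<lambda>n z. \<Sum>j<n. complex_of_real (c j) * z ^ m j"])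
    fix n show "(\<lambda>z. \<Sum>j<n. complex_of_real (c j) * z ^ m j) holomorphic_on ball 0 1"
      by (intro holomorphic_intros)
  next
    fix z :: complex assume z: "z \<in> ball 0 1"
    define d where "d = (1 - norm z) / 2"
    define \<rho> where "\<rho> = (1 + norm z) / 2"
    have d0: "d > 0" using z unfolding d_def by simp
    have cb: "cball z d \<subseteq> ball 0 1"
    proof
      fix w assume "w \<in> cball z d"
      hence "norm w \<le> norm z + d" using norm_triangle_ineq2[of w z] by (auto simp: dist_norm norm_minus_commute)
      moreover have "norm z < 1" using z by simp
      ultimately have "norm w < 1" unfolding d_def by (simp add: field_simps)
      thus "w \<in> ball 0 1" by simp
    qed
    have rho: "0 \<le> \<rho>" "\<rho> < 1" using z unfolding \<rho>_def by auto
    have "uniform_limit (cball z d) (\<lambda>n w. \<Sum>j<n. complex_of_real (c j) * w ^ m j)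
            (\<lambda>w. \<Sum>j. complex_of_real (c j) * w ^ m j) sequentially"
    proof (rule Weierstrass_m_test)
      fix n w assume "w \<in> cball z d"
      hence "norm w \<le> \<rho>" using norm_triangle_ineq2[of w z] unfolding d_def \<rho>_def
        by (auto simp: dist_norm norm_minus_commute)
      thus "norm (complex_of_real (c n) * w ^ m n) \<le> c n * \<rho> ^ m n"
        using c_nonneg[of n] by (simp add: norm_mult norm_power mult_left_mono power_mono)
    next
      show "summable (\<lambda>n. c n * \<rho> ^ m n)" using csum rho by blast
    qed
    thus "\<exists>d>0. cball z d \<subseteq> ball 0 1 \<and> uniform_limit (cball z d)
            (\<lambda>n w. \<Sum>j<n. complex_of_real (c j) * w ^ m j) (\<lambda>w. \<Sum>j. complex_of_real (c j) * w ^ m j) sequentially"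
      using d0 cb by blast
  qed auto
  thus ?thesis unfolding g_def[abs_def] .
qed


lemma ln_m_Suc: "ln (real (m (Suc J))) = real b * ln (real (m J))"
  unfolding m_def by (simp add: ln_realpow)

lemma Re_g_lower:
  assumes r1: "3/4 < r" and r2: "r < 1"
  shows "Re (g (complex_of_real r * cis (psi x))) \<ge> (- ln (1 - r)) / (4 * (real b + 1))"
proof -
  define \<theta> where "\<theta> = psi x"
  define z where "z = complex_of_real r * cis \<theta>"
  have nz: "norm z = r" unfolding z_def using r1 by (simp add: norm_mult)
  have nz1: "norm z < 1" using nz r2 by simp
  have rt: "Re (complex_of_real (c j) * z ^ m j) = c j * r ^ m j * cos (real (m j) * \<theta>)" for j
  proof -
    have "z ^ m j = complex_of_real (r ^ m j) * cis (real (m j) * \<theta>)"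
      unfolding z_def by (simp add: power_mult_distrib Complex.DeMoivre)
    thus ?thesis by simp
  qed
  have sumc: "summable (\<lambda>j. complex_of_real (c j) * z ^ m j)"
    using g_norm_summable[OF nz1] by (rule summable_norm_cancel)
  have "(\<lambda>j. Re (complex_of_real (c j) * z ^ m j)) sums Re (g z)"
    unfolding g_def using sumc by (intro sums_Re) (simp add: summable_sums)
  hence sre: "(\<lambda>j. c j * r ^ m j * cos (real (m j) * \<theta>)) sums Re (g z)" unfolding rt .
  have cs: "summable (\<lambda>j. c j * r ^ m j)" using csum[of r] r1 r2 by auto
  have "(\<Sum>j. c j * r ^ m j / 2) \<le> (\<Sum>j. c j * r ^ m j * cos (real (m j) * \<theta>))"
  proof (rule suminf_le)
    fix j
    have "cos (real (m j) * \<theta>) \<ge> 1/2" unfolding \<theta>_def by (rule cos_psi)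
    moreover have "c j * r ^ m j \<ge> 0" using c_nonneg[of j] r1 by simp
    ultimately show "c j * r ^ m j / 2 \<le> c j * r ^ m j * cos (real (m j) * \<theta>)"
      by (metis mult_left_mono mult.commute times_divide_eq_right mult_1)
  qed (use cs sre in \<open>auto simp: sums_iff\<close>)
  hence low1: "Re (g z) \<ge> (\<Sum>j. c j * r ^ m j / 2)" using sre by (simp add: sums_iff)
  define X where "X = 1 / (2 * (1 - r))"
  have X2: "X > 2" unfolding X_def using r1 r2 by (simp add: field_simps)
  obtain k where k: "X < 2 ^ k" using real_arch_pow[of 2 X] by auto
  have "real (m (Suc k)) \<ge> 2 ^ Suc k" using m_ge[of "Suc k"]
    by (metis of_nat_le_iff of_nat_numeral of_nat_power)
  moreover have "(2::real) ^ k \<le> 2 ^ Suc k" by simp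
  ultimately have "real (m (Suc k)) \<ge> 2 ^ k" by linarith
  hence ex: "\<exists>k. X < real (m (Suc k))" using k by (intro exI[of _ k]) linarith
  define J where "J = (LEAST k. X < real (m (Suc k)))"
  have J1: "X < real (m (Suc J))" unfolding J_def using ex by (rule LeastI_ex)
  have J2: "real (m J) \<le> X"
  proof (cases J)
    case 0 thus ?thesis using X2 m_0 by simp
  next
    case (Suc J')
    have "\<not> X < real (m (Suc J'))" using Suc unfolding J_def
      by (metis lessI not_less_Least)
    thus ?thesis using Suc by simp
  qed
  have mJpos: "real (m J) \<ge> 2" using m_ge2[of J] by simp
  have "1 + real (m J) * (r - 1) \<le> (1 + (r - 1)) ^ m J" using r1 by (intro Bernoulli_inequality) auto
  hence "1 - real (m J) * (1 - r) \<le> r ^ m J" by (simp add: algebra_simps)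
  moreover have "real (m J) * (1 - r) \<le> 1/2"
    using J2 r2 unfolding X_def by (simp add: field_simps)
  ultimately have rJ: "r ^ m J \<ge> 1/2" by linarith
  have "(\<Sum>j<Suc J. c j * r ^ m j / 2) \<le> (\<Sum>j. c j * r ^ m j / 2)"
    using cs c_nonneg r1 by (intro sum_le_suminf) (auto intro: summable_divide)
  moreover have "(\<Sum>j<Suc J. c j * r ^ m J / 2) \<le> (\<Sum>j<Suc J. c j * r ^ m j / 2)"
  proof (intro sum_mono divide_right_mono mult_left_mono)
    fix j assume "j \<in> {..<Suc J}"
    hence "m j \<le> m J" using m_strict[of j J] by (cases "j = J") auto
    thus "r ^ m J \<le> r ^ m j" using r1 r2 by (intro power_decreasing) auto
  qed (use c_nonneg in auto)
  moreover have "(\<Sum>j<Suc J. c j * r ^ m J / 2) = harm (m J) * r ^ m J / 2"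
  proof -
    have "(\<Sum>j<Suc J. c j * r ^ m J / 2) = (\<Sum>j<Suc J. c j) * r ^ m J / 2"
      by (simp add: sum_divide_distrib[symmetric] sum_distrib_right[symmetric])
    thus ?thesis using c_part_harm[of "Suc J"] unfolding Mp_Suc by simp
  qed
  ultimately have low2: "Re (g z) \<ge> harm (m J) * r ^ m J / 2" using low1 by linarith
  have "harm (m J) \<ge> ln (real (m J))"
    using ln_le_harm[of "m J"] mJpos by (smt (verit) ln_le_cancel_iff)
  hence "harm (m J) * r ^ m J / 2 \<ge> ln (real (m J)) * (1/2) / 2"
    using rJ mJpos harm_nonneg[of "m J"] by (intro divide_right_mono mult_mono) auto
  hence low3: "Re (g z) \<ge> ln (real (m J)) / 4" using low2 by simp
  have "1 / (1 - r) < 2 * real (m (Suc J))" using J1 r2 unfolding X_def by (simp add: field_simps)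
  hence "ln (1 / (1 - r)) < ln (2 * real (m (Suc J)))" using r2 m_pos[of "Suc J"] by (subst ln_less_cancel_iff) auto
  hence "- ln (1 - r) < ln 2 + real b * ln (real (m J))"
    using r2 m_pos[of "Suc J"] by (simp add: ln_div ln_mult ln_m_Suc)
  moreover have "ln 2 \<le> ln (real (m J))" using mJpos by simp
  ultimately have "- ln (1 - r) \<le> (real b + 1) * ln (real (m J))" by (simp add: algebra_simps)
  hence "(- ln (1 - r)) / (4 * (real b + 1)) \<le> ln (real (m J)) / 4"
    by (simp add: field_simps)
  thus ?thesis using low3 unfolding z_def \<theta>_def by linarith
qed

lemma psi_Dplus: assumes "x \<in> {0..<1}" shows "psi x \<in> D_plus (\<lambda>z. exp (g z))"
proof -
  define \<delta> where "\<delta> = 1 / (4 * (real b + 1))"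
  have d0: "\<delta> > 0" unfolding \<delta>_def by simp
  have ev: "eventually (\<lambda>r. ereal \<delta> \<le> ereal (ln (norm (exp (g (complex_of_real r * cis (psi x)))))
               / \<bar>ln (1 - r)\<bar>)) (at_left (1::real))"
  proof (rule eventually_mono[OF eventually_at_left_real[of "3/4" 1]])
    fix r :: real assume r: "r \<in> {3/4<..<1}"
    have lpos: "- ln (1 - r) > 0" using r by simp
    have "\<bar>ln (1 - r)\<bar> = - ln (1 - r)" using lpos by linarith
    moreover have "\<delta> * (- ln (1 - r)) \<le> Re (g (complex_of_real r * cis (psi x)))"
      using Re_g_lower[of r x] r unfolding \<delta>_def by (simp add: field_simps)
    ultimately show "ereal \<delta> \<le> ereal (ln (norm (exp (g (complex_of_real r * cis (psi x))))) / \<bar>ln (1 - r)\<bar>)"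
      using lpos by (simp add: field_simps)
  qed simp
  have "ereal \<delta> \<le> Liminf (at_left 1) (\<lambda>r. ereal (ln (norm (exp (g (complex_of_real r * cis (psi x))))) / \<bar>ln (1 - r)\<bar>))"
    using ev by (rule Liminf_bounded)
  moreover have "psi x \<in> {0..<2*pi}"
  proof -
    have "0 \<le> psi x" "psi x \<le> pi / 8" using psi_bounds[of x] by auto
    moreover have "psi x < 2 * pi" using calculation pi_gt_zero by linarith
    ultimately show ?thesis by simp
  qed
  ultimately show ?thesis unfolding D_plus_def using d0
    by (auto intro: less_le_trans[of 0 "ereal \<delta>"])
qed

end

theorem proposition2:
  fixes \<alpha> :: real
  assumes "\<alpha> > 0"
  shows "\<exists>f. A_neg_inf f \<and> (\<forall>z\<in>ball 0 1. f z \<noteq> 0) \<and> A_neg_inf (\<lambda>z. inverse (f z)) \<and>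
             hausdorff_lambda (\<lambda>t. t * \<bar>ln t\<bar> powr \<alpha>) (cis ` D_plus f) = \<infinity>"
proof -
  define b :: nat where "b = nat \<lceil>32 powr (1/\<alpha>)\<rceil> + 7"
  have b7: "b \<ge> 7" unfolding b_def by simp
  have "32 powr (1/\<alpha>) \<le> real b" unfolding b_def by linarith
  hence "(32 powr (1/\<alpha>)) powr \<alpha> \<le> real b powr \<alpha>" using assms by (intro powr_mono2) auto
  moreover have "(32 powr (1/\<alpha>)) powr \<alpha> = 32" using assms by (simp add: powr_powr)
  ultimately have bq: "real b powr \<alpha> \<ge> 32" by simp
  interpret cset b \<alpha> by unfold_locales (use b7 assms bq in auto)
  define f where "f = (\<lambda>z. exp (g z))"
  have gb: "norm (g z) \<le> - ln (1 - norm z)" if "z \<in> ball 0 1" for z using g_bound that by simp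
  have lnb: "exp (- ln (1 - norm z)) = 1 * (1 - norm z) powr (- 1)" if "z \<in> ball 0 1" for z
    using that by (simp add: exp_minus powr_neg_one divide_inverse)
  have A1: "A_neg_inf f"
    unfolding A_neg_inf_def
  proof (intro conjI exI ballI)
    show "f holomorphic_on ball 0 1" unfolding f_def by (intro holomorphic_intros g_holo)
    fix z :: complex assume z: "z \<in> ball 0 1"
    have "norm (f z) = exp (Re (g z))" unfolding f_def by simp
    also have "\<dots> \<le> exp (norm (g z))" using abs_Re_le_cmod[of "g z"] by simp
    also have "\<dots> \<le> exp (- ln (1 - norm z))" using gb[OF z] by simp
    also have "\<dots> = 1 * (1 - norm z) powr (- 1)" using lnb[OF z] .
    finally show "norm (f z) \<le> 1 * (1 - norm z) powr (- 1)" .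
  qed
  have A2: "A_neg_inf (\<lambda>z. inverse (f z))"
    unfolding A_neg_inf_def
  proof (intro conjI exI ballI)
    have e: "(\<lambda>z. inverse (f z)) = (\<lambda>z. exp (- g z))" unfolding f_def by (simp add: exp_minus)
    show "(\<lambda>z. inverse (f z)) holomorphic_on ball 0 1" unfolding e by (intro holomorphic_intros g_holo)
    fix z :: complex assume z: "z \<in> ball 0 1"
    have "norm (inverse (f z)) = exp (- Re (g z))" unfolding f_def by (simp add: exp_minus norm_inverse)
    also have "\<dots> \<le> exp (norm (g z))" using abs_Re_le_cmod[of "g z"] by simp
    also have "\<dots> \<le> exp (- ln (1 - norm z))" using gb[OF z] by simp
    also have "\<dots> = 1 * (1 - norm z) powr (- 1)" using lnb[OF z] .
    finally show "norm (inverse (f z)) \<le> 1 * (1 - norm z) powr (- 1)" .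
  qed
  have A3: "\<forall>z\<in>ball 0 1. f z \<noteq> 0" unfolding f_def by simp
  have "psi ` {0..<1} \<subseteq> D_plus f"
  proof
    fix t assume "t \<in> psi ` {0..<1}"
    then obtain x where "x \<in> {0..<1}" "t = psi x" by blast
    thus "t \<in> D_plus f" unfolding f_def using psi_Dplus by simp
  qed
  hence sub: "cis ` psi ` {0..<1} \<subseteq> cis ` D_plus f" by (rule image_mono)
  have lam_eq: "(\<lambda>t. t * \<bar>ln t\<bar> powr \<alpha>) = lam" by (simp add: lam_def fun_eq_iff)
  have H0: "hausdorff_lambda lam (cis ` D_plus f) = top"
    unfolding hausdorff_lambda_def SUP_eq_top_iff
  proof (intro allI impI)
    fix x :: ennreal assume "x < top"
    then obtain y where y: "y \<ge> 0" "x = ennreal y" using less_top_ennreal by blast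
    define A where "A = ln 2 powr \<alpha> / 16"
    have A0: "A > 0" unfolding A_def by simp
    obtain N where N: "max (2 * y / A) (5 * exp \<alpha>) < 2 ^ N"
      using real_arch_pow[of 2 "max (2 * y / A) (5 * exp \<alpha>)"] by auto
    have mN: "real (m N) \<ge> 2 ^ N" using m_ge[of N] by (metis of_nat_le_iff of_nat_numeral of_nat_power)
    have "kap N \<ge> A * 2 ^ N" using kap_ge[of N] unfolding A_def by simp
    moreover have "A * 2 ^ N > A * (2 * y / A)" using N A0 by (intro mult_strict_left_mono) auto
    ultimately have "kap N > 2 * y" using A0 by simp
    hence yk: "y < kap N / 2" by simp
    have "5 * exp \<alpha> \<le> real (m N)" using N mN by linarith
    hence Ne: "5 / real (m N) \<le> exp (- \<alpha>)" using m_pos[of N] by (simp add: field_simps exp_minus)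
    have eps: "5 / real (m N) \<in> {0<..}" using m_pos[of N] by simp
    have "x < ennreal (kap N / 2)" using y yk by (simp add: ennreal_less_iff)
    also have "ennreal (kap N / 2) \<le> (INF (a, l)\<in>{(a, l). (\<forall>n. 0 \<le> l n \<and> l n < 5 / real (m N)) \<and>
                  cis ` D_plus f \<subseteq> (\<Union>n. arc (a n) (l n))}. (\<Sum>n. ennreal (lam (l n))))"
    proof (rule INF_greatest)
      fix p :: "(nat \<Rightarrow> real) \<times> (nat \<Rightarrow> real)" assume "p \<in> {(a, l). (\<forall>n. 0 \<le> l n \<and> l n < 5 / real (m N)) \<and>
                  cis ` D_plus f \<subseteq> (\<Union>n. arc (a n) (l n))}"
      then have pm: "p \<in> {(a, l). (\<forall>n. 0 \<le> l n \<and> l n < 5 / real (m N)) \<and>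
                  cis ` D_plus f \<subseteq> (\<Union>n. arc (a n) (l n))}" .
      obtain a l where p: "p = (a, l)" by (cases p)
      have mem: "(\<forall>n. 0 \<le> l n \<and> l n < 5 / real (m N)) \<and> cis ` D_plus f \<subseteq> (\<Union>n. arc (a n) (l n))"
        using pm unfolding p mem_Collect_eq prod.case by assumption
      have l: "\<And>n. 0 \<le> l n \<and> l n < 5 / real (m N)" using conjunct1[OF mem] by (rule spec)
      have cov: "cis ` D_plus f \<subseteq> (\<Union>n. arc (a n) (l n))" using mem by (rule conjunct2)
      show "ennreal (kap N / 2) \<le> (case p of (a, l) \<Rightarrow> \<Sum>n. ennreal (lam (l n)))"
      proof -
        have cv: "cis ` psi ` {0..<1} \<subseteq> (\<Union>n. arc (a n) (l n))" using sub cov by (rule order_trans)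
        have "ennreal (kap N / 2) \<le> (\<Sum>n. ennreal (lam (l n)))" by (rule cover_bound[OF Ne l cv])
        thus ?thesis unfolding p by (simp only: prod.case)
      qed
    qed
    finally show "\<exists>\<epsilon>\<in>{0<..}. x < (INF (a, l)\<in>{(a, l). (\<forall>n. 0 \<le> l n \<and> l n < \<epsilon>) \<and>
                  cis ` D_plus f \<subseteq> (\<Union>n. arc (a n) (l n))}. (\<Sum>n. ennreal (lam (l n))))"
      using eps by blast
  qed
  have H: "hausdorff_lambda lam (cis ` D_plus f) = \<infinity>" using H0 by simp
  show ?thesis using A1 A2 A3 H unfolding lam_eq by blast
qed

end
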